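(* Let $g:\mathbb{R}^p\to[-\infty,\infty]$ be a proper nearly convex function and $A\in\mathbb{R}^{p\times n}$ such that $A(\mathbb{R}^n)\cap\operatorname{ri}(\operatorname{dom} g)\neq\emptyset$. Then $(g\circ A)^*(w)=\inf\{g^*(v): v\in\mathbb{R}^p,\ A^Tv=w\}$ for all $w\in\mathbb{R}^n$. Moreover, if $(g\circ A)^*(w)\in\mathbb{R}$, there exists $v\in\mathbb{R}^p$ with $A^Tv=w$ and $(g\circ A)^*(w)=g^*(v)$.
   Context: A set $\Omega$ is nearly convex if there is a convex set $C$ with $C\subset\Omega\subset\overline{C}$; $\operatorname{ri}\Omega=\{a\in\Omega:\exists\delta>0,\ B(a;\delta)\cap\operatorname{aff}\Omega\subset\Omega\}$. A function $g$ is nearly convex if its epigraph is nearly convex, proper if $\operatorname{dom}g=\{g<\infty\}\neq\emptyset$ and $g>-\infty$. Fenchel conjugate: $g^*(v)=\sup_y\{\langle v,y\rangle-g(y)\}$. *)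

theory Defs
  imports "HOL-Analysis.Analysis" "HOL-Library.Extended_Real"
begin

definition nearly_convex_set :: "'a::real_normed_vector set \<Rightarrow> bool" where
  "nearly_convex_set \<Omega> \<longleftrightarrow> (\<exists>C. convex C \<and> C \<subseteq> \<Omega> \<and> \<Omega> \<subseteq> closure C)"

definition ri :: "'a::real_normed_vector set \<Rightarrow> 'a set" where
  "ri \<Omega> = {a \<in> \<Omega>. \<exists>\<delta>>0. ball a \<delta> \<inter> affine hull \<Omega> \<subseteq> \<Omega>}"

definition epi :: "('a \<Rightarrow> ereal) \<Rightarrow> ('a \<times> real) set" where
  "epi g = {(x, \<mu>). g x \<le> ereal \<mu>}"

definition edom :: "('a \<Rightarrow> ereal) \<Rightarrow> 'a set" where
  "edom g = {x. g x < \<infinity>}"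

definition nearly_convex_fun :: "('a::real_normed_vector \<Rightarrow> ereal) \<Rightarrow> bool" where
  "nearly_convex_fun g \<longleftrightarrow> nearly_convex_set (epi g)"

definition proper_fun :: "('a \<Rightarrow> ereal) \<Rightarrow> bool" where
  "proper_fun g \<longleftrightarrow> edom g \<noteq> {} \<and> (\<forall>x. g x > -\<infinity>)"

definition fconj :: "('a::real_inner \<Rightarrow> ereal) \<Rightarrow> 'a \<Rightarrow> ereal" where
  "fconj g v = (SUP y. ereal (v \<bullet> y) - g y)"

end

theory Submission
  imports Defs
begin

lemma tr_inner:
  fixes A :: "real^'n^'p"
  shows "(transpose A *v v) \<bullet> x = v \<bullet> (A *v x)"
proof -
  have "transpose A *v v = v v* A" by (metis transpose_transpose vector_transpose_matrix)
  then show ?thesis by (simp add: dot_lmul_matrix)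
qed

lemma lin_zero:
  fixes k m b :: real
  assumes "\<And>c. b \<le> c*k + m" shows "k = 0"
proof (rule ccontr)
  assume "k \<noteq> 0"
  have "b \<le> ((b - m - 1)/k)*k + m" by (rule assms)
  also have "\<dots> = b - 1" using \<open>k \<noteq> 0\<close> by simp
  finally show False by simp
qed

lemma divn1: fixes \<beta> b X :: real
  assumes "\<beta> < 0" "b \<le> (-\<beta>)*X" shows "b/(-\<beta>) \<le> X"
proof -
  have "0 < -\<beta>" using assms by simp
  then show ?thesis using assms(2) by (subst pos_divide_le_eq) (auto simp: mult.commute)
qed

lemma divn2: fixes \<beta> b X :: real
  assumes "\<beta> < 0" "(-\<beta>)*X \<le> b" shows "X \<le> b/(-\<beta>)"
proof -
  have "0 < -\<beta>" using assms by simp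
  then show ?thesis using assms(2) by (subst pos_le_divide_eq) (auto simp: mult.commute)
qed

lemma core:
  fixes g :: "real^'p \<Rightarrow> ereal" and A :: "real^'n^'p"
  assumes pr: "proper_fun g" and nc: "nearly_convex_fun g"
    and y0: "A *v x0 \<in> ri (edom g)"
    and alpha: "fconj (\<lambda>x. g (A *v x)) w = ereal r"
  shows "\<exists>v. transpose A *v v = w \<and> fconj g v \<le> ereal r"
proof -
  have gfin: "g y > -\<infinity>" for y using pr unfolding proper_fun_def by auto
  have bound: "w \<bullet> x - \<mu> \<le> r" if "g (A *v x) \<le> ereal \<mu>" for x \<mu>
  proof -
    have "ereal (w \<bullet> x) - ereal \<mu> \<le> ereal (w \<bullet> x) - g (A *v x)"
      using ereal_minus_mono[OF order_refl[of "ereal (w \<bullet> x)"] that] by simp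
    also have "\<dots> \<le> fconj (\<lambda>x. g (A *v x)) w" unfolding fconj_def by (rule SUP_upper) simp
    finally show ?thesis using alpha by simp
  qed
  obtain C where C: "convex C" "C \<subseteq> epi g" "epi g \<subseteq> closure C"
    using nc unfolding nearly_convex_fun_def nearly_convex_set_def by blast
  define Z where "Z = {z. (\<forall>y\<in>edom g. z \<bullet> y = 0) \<and> (\<forall>x. z \<bullet> (A *v x) = 0)}"
  define D where "D = {(A *v x + z, \<mu>) | x z \<mu>. z \<in> Z \<and> \<mu> < w \<bullet> x - r}"
  have Zs: "c *\<^sub>R z \<in> Z" if "z \<in> Z" for c z using that by (simp add: Z_def)
  have Z0: "0 \<in> Z" by (simp add: Z_def)
  obtain y1 where y1: "y1 \<in> edom g" using pr unfolding proper_fun_def by auto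
  have gy1: "g y1 = ereal (real_of_ereal (g y1))" using y1 gfin[of y1] unfolding edom_def
    by (cases "g y1") auto
  have "(y1, real_of_ereal (g y1)) \<in> epi g" unfolding epi_def using gy1 by auto
  then have Cne: "C \<noteq> {}" using C(3) by auto
  have Dne: "D \<noteq> {}" unfolding D_def using Z0
    by (auto intro!: exI[of _ "A *v 0 + 0"] exI[of _ 0] exI[of _ "-r-1"])
  have Dconv: "convex D"
  proof (unfold convex_def, intro ballI allI impI)
    fix p q and u v :: real
    assume p: "p \<in> D" and q: "q \<in> D" and uv: "0 \<le> u" "0 \<le> v" "u + v = 1"
    obtain x1 z1 \<mu>1 where 1: "p = (A *v x1 + z1, \<mu>1)" "z1 \<in> Z" "\<mu>1 < w \<bullet> x1 - r"
      using p unfolding D_def by blast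
    obtain x2 z2 \<mu>2 where 2: "q = (A *v x2 + z2, \<mu>2)" "z2 \<in> Z" "\<mu>2 < w \<bullet> x2 - r"
      using q unfolding D_def by blast
    have zz: "u *\<^sub>R z1 + v *\<^sub>R z2 \<in> Z" using 1(2) 2(2)
      by (simp add: Z_def inner_add_left)
    have mu: "u*\<mu>1 + v * \<mu>2 < w \<bullet> (u *\<^sub>R x1 + v *\<^sub>R x2) - r"
    proof -
      have "u*\<mu>1 \<le> u*(w \<bullet> x1 - r)" using 1(3) uv by (intro mult_left_mono) auto
      moreover have "v * \<mu>2 \<le> v * (w \<bullet> x2 - r)" using 2(3) uv by (intro mult_left_mono) auto
      moreover have "u > 0 \<or> v > 0" using uv by auto
      moreover have "u*\<mu>1 < u*(w \<bullet> x1 - r)" if "u > 0" using 1(3) that by simp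
      moreover have "v * \<mu>2 < v * (w \<bullet> x2 - r)" if "v > 0" using 2(3) that by simp
      ultimately have "u*\<mu>1 + v * \<mu>2 < u*(w \<bullet> x1 - r) + v * (w \<bullet> x2 - r)" by linarith
      also have "\<dots> = w \<bullet> (u *\<^sub>R x1 + v *\<^sub>R x2) - r * (u + v)"
        by (simp add: inner_add_right algebra_simps)
      also have "\<dots> = w \<bullet> (u *\<^sub>R x1 + v *\<^sub>R x2) - r" using uv(3) by simp
      finally show ?thesis .
    qed
    have "u *\<^sub>R p + v *\<^sub>R q = (A *v (u *\<^sub>R x1 + v *\<^sub>R x2) + (u *\<^sub>R z1 + v *\<^sub>R z2), u*\<mu>1 + v * \<mu>2)"
      using 1(1) 2(1) by (simp add: algebra_simps)
    then show "u *\<^sub>R p + v *\<^sub>R q \<in> D" unfolding D_def using zz mu by blast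
  qed
  have disj: "C \<inter> D = {}"
  proof (rule ccontr)
    assume "C \<inter> D \<noteq> {}"
    then obtain x z \<mu> where z: "z \<in> Z" "\<mu> < w \<bullet> x - r" "(A *v x + z, \<mu>) \<in> epi g"
      using C(2) unfolding D_def by blast
    have le: "g (A *v x + z) \<le> ereal \<mu>" using z(3) unfolding epi_def by auto
    then have "A *v x + z \<in> edom g" unfolding edom_def by (auto intro: le_less_trans)
    then have "z \<bullet> (A *v x + z) = 0" "z \<bullet> (A *v x) = 0" using z(1) unfolding Z_def by auto
    then have "z \<bullet> z = 0" by (simp add: inner_add_right)
    then have "z = 0" by simp
    with le bound z(2) show False by fastforce
  qed
  obtain ab b where ab: "ab \<noteq> 0" "\<forall>p\<in>C. ab \<bullet> p \<le> b" "\<forall>p\<in>D. ab \<bullet> p \<ge> b"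
    using separating_hyperplane_sets[OF C(1) Dconv Cne Dne disj] by blast
  obtain a \<beta> where abeq: "ab = (a, \<beta>)" by (cases ab)
  have "closure C \<subseteq> {p. ab \<bullet> p \<le> b}"
    using ab(2) by (intro closure_minimal) (auto simp: closed_halfspace_le)
  then have F2: "a \<bullet> y + \<beta> * \<mu> \<le> b" if "g y \<le> ereal \<mu>" for y \<mu>
  proof -
    have "(y, \<mu>) \<in> epi g" using that unfolding epi_def by simp
    then have "(y, \<mu>) \<in> {p. ab \<bullet> p \<le> b}" using C(3) \<open>closure C \<subseteq> _\<close> by blast
    then show ?thesis unfolding abeq by (simp add: inner_Pair)
  qed
  have F1: "a \<bullet> (A *v x + z) + \<beta> * \<mu> \<ge> b" if "z \<in> Z" "\<mu> < w \<bullet> x - r" for x z \<mu>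
    using ab(3) that unfolding D_def abeq by (force simp: inner_Pair)
  have aZ: "a \<bullet> z = 0" if "z \<in> Z" for z
  proof (rule lin_zero)
    fix c
    have "b \<le> a \<bullet> (A *v 0 + c *\<^sub>R z) + \<beta> * (-r-1)"
      by (rule F1) (use Zs[OF that] in auto)
    then show "b \<le> c * (a \<bullet> z) + \<beta> * (-r-1)" by simp
  qed
  have bneg: "\<beta> \<le> 0"
  proof (rule ccontr)
    assume "\<not> \<beta> \<le> 0"
    define t where "t = (\<bar>b - a \<bullet> y1 - \<beta> * real_of_ereal (g y1)\<bar> + 1) / \<beta>"
    have t0: "t \<ge> 0" using \<open>\<not> \<beta> \<le> 0\<close> by (simp add: t_def)
    obtain R where R: "g y1 = ereal R" "real_of_ereal (g y1) = R" using gy1 by auto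
    have "g y1 \<le> ereal (real_of_ereal (g y1) + t)"
      using t0 R by simp
    from F2[OF this] have "a \<bullet> y1 + \<beta> * (real_of_ereal (g y1) + t) \<le> b" .
    moreover have "\<beta> * t = \<bar>b - a \<bullet> y1 - \<beta> * real_of_ereal (g y1)\<bar> + 1"
      using \<open>\<not> \<beta> \<le> 0\<close> by (simp add: t_def)
    ultimately show False by (simp add: algebra_simps)
  qed
  show ?thesis
  proof (cases "\<beta> = 0")
    case True
    with abeq ab(1) have a0: "a \<noteq> 0" by (auto simp: zero_prod_def)
    have aA: "a \<bullet> (A *v x) = 0" for x
    proof (rule lin_zero)
      fix c
      have "b \<le> a \<bullet> (A *v (c *\<^sub>R x) + 0) + \<beta> * (w \<bullet> (c *\<^sub>R x) - r - 1)"
        by (rule F1) (auto simp: Z0)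
      then show "b \<le> c * (a \<bullet> (A *v x)) + 0" using True by (simp add: algebra_simps)
    qed
    have b0: "b \<le> 0" using F1[OF Z0, of "w \<bullet> 0 - r - 1" 0] aA[of 0] True by simp
    have dle: "a \<bullet> y \<le> 0" if "y \<in> edom g" for y
    proof -
      have "g y = ereal (real_of_ereal (g y))" using that gfin[of y] unfolding edom_def
        by (cases "g y") auto
      then have "g y \<le> ereal (real_of_ereal (g y))" by simp
      from F2[OF this] True b0 show ?thesis by simp
    qed
    have dge: "a \<bullet> y \<ge> 0" if y: "y \<in> edom g" for y
    proof -
      let ?y0 = "A *v x0"
      obtain \<delta> where \<delta>: "\<delta> > 0" "ball ?y0 \<delta> \<inter> affine hull (edom g) \<subseteq> edom g"
        using y0 unfolding ri_def by auto
      have y0e: "?y0 \<in> edom g" using y0 unfolding ri_def by auto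
      define t where "t = \<delta> / (2 * (norm (y - ?y0) + 1))"
      have tpos: "t > 0" using \<delta> unfolding t_def by (intro divide_pos_pos) (auto intro: add_nonneg_pos)
      define p where "p = (1 + t) *\<^sub>R ?y0 + (-t) *\<^sub>R y"
      have "p \<in> affine hull (edom g)"
        unfolding p_def
        by (rule mem_affine[OF affine_affine_hull]) (use y y0e hull_inc in auto)
      moreover have "dist ?y0 p < \<delta>"
      proof -
        have "dist ?y0 p = t * norm (y - ?y0)"
          unfolding p_def dist_norm using tpos
          by (simp add: algebra_simps norm_minus_commute flip: scaleR_diff_right)
        also have "\<dots> < \<delta>"
        proof -
          have "t * norm (y - ?y0) \<le> t * (norm (y - ?y0) + 1)" using tpos by simp
          also have "\<dots> = \<delta> / 2"
          proof -
            have "norm (y - ?y0) + 1 \<noteq> 0" by (smt (verit) norm_ge_zero)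
            then show ?thesis unfolding t_def by (simp add: field_simps)
          qed
          finally show ?thesis using \<delta> by simp
        qed
        finally show ?thesis .
      qed
      ultimately have "p \<in> edom g" using \<delta> by auto
      from dle[OF this] have "a \<bullet> p \<le> 0" .
      then have "-t * (a \<bullet> y) \<le> 0" unfolding p_def using aA[of x0]
        by (simp add: inner_add_right inner_diff_right)
      then show ?thesis using tpos by (simp add: zero_le_mult_iff)
    qed
    have "a \<in> Z" unfolding Z_def using dle dge aA by (auto intro: antisym)
    from aZ[OF this] a0 show ?thesis by simp
  next
    case False
    with bneg have bl: "\<beta> < 0" by simp
    define v where "v = (-1/\<beta>) *\<^sub>R a"
    have av: "a \<bullet> y = (-\<beta>) * (v \<bullet> y)" for y using bl by (simp add: v_def)
    have key: "a \<bullet> (A *v x) + \<beta> * (w \<bullet> x - r) \<ge> b" for x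
    proof (rule ccontr)
      let ?s = "w \<bullet> x - r"
      assume neg: "\<not> ?thesis"
      define e where "e = (b - (a \<bullet> (A *v x) + \<beta> * ?s)) / (-2*\<beta>)"
      have epos: "e > 0" using neg bl by (simp add: e_def divide_pos_neg)
      have "b \<le> a \<bullet> (A *v x + 0) + \<beta> * (?s - e)"
        by (rule F1) (use epos Z0 in auto)
      then have "b \<le> a \<bullet> (A *v x) + \<beta> * ?s - \<beta> * e" by (simp add: right_diff_distrib)
      moreover have "\<beta> * e = - (b - (a \<bullet> (A *v x) + \<beta> * ?s)) / 2"
        using bl by (simp add: e_def field_simps)
      ultimately show False using neg by argo
    qed
    define c where "c = b / (-\<beta>)"
    have key2: "v \<bullet> (A *v x) - w \<bullet> x + r \<ge> c" for x
    proof -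
      have "b \<le> (-\<beta>) * (v \<bullet> (A *v x) - w \<bullet> x + r)"
        using key[of x] av[of "A *v x"] by (simp add: algebra_simps)
      then show ?thesis unfolding c_def by (rule divn1[OF bl])
    qed
    define d where "d = transpose A *v v - w"
    have dx: "d \<bullet> x = v \<bullet> (A *v x) - w \<bullet> x" for x by (simp add: d_def inner_diff_left dot_lmul_matrix)
    have "d \<bullet> d = 0"
    proof (rule lin_zero)
      fix t
      show "c - r \<le> t * (d \<bullet> d) + 0" using key2[of "t *\<^sub>R d"] dx[of "t *\<^sub>R d"] by simp
    qed
    then have "transpose A *v v = w" unfolding d_def by simp
    moreover have "fconj g v \<le> ereal r"
      unfolding fconj_def
    proof (rule SUP_least)
      fix y
      have cr: "c \<le> r" using key2[of 0] by simp
      show "ereal (v \<bullet> y) - g y \<le> ereal r"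
      proof (cases "g y")
        case (real \<mu>)
        have "a \<bullet> y + \<beta> * \<mu> \<le> b" using F2[of y \<mu>] real by simp
        then have "(-\<beta>) * (v \<bullet> y - \<mu>) \<le> b" using av[of y] by (simp add: algebra_simps)
        then have "v \<bullet> y - \<mu> \<le> c" unfolding c_def by (rule divn2[OF bl])
        then show ?thesis using real cr by simp
      next
        case PInf then show ?thesis by simp
      next
        case MInf then show ?thesis using gfin[of y] by simp
      qed
    qed
    ultimately show ?thesis by blast
  qed
qed

theorem theorem6p7:
  fixes g :: "real^'p \<Rightarrow> ereal" and A :: "real^'n^'p"
  assumes "proper_fun g" and "nearly_convex_fun g"
    and "range (\<lambda>x. A *v x) \<inter> ri (edom g) \<noteq> {}"
  shows "(\<forall>w. fconj (\<lambda>x. g (A *v x)) w = (INF v\<in>{v. transpose A *v v = w}. fconj g v))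
    \<and> (\<forall>w. fconj (\<lambda>x. g (A *v x)) w \<noteq> \<infinity> \<and> fconj (\<lambda>x. g (A *v x)) w \<noteq> -\<infinity> \<longrightarrow>
           (\<exists>v. transpose A *v v = w \<and> fconj (\<lambda>x. g (A *v x)) w = fconj g v))"
proof -
  let ?h = "fconj (\<lambda>x. g (A *v x))"
  obtain x0 where x0: "A *v x0 \<in> ri (edom g)" using assms(3) by auto
  have easy: "?h w \<le> fconj g v" if "transpose A *v v = w" for w v
    unfolding fconj_def
  proof (rule SUP_least)
    fix x
    have "ereal (w \<bullet> x) - g (A *v x) = ereal (v \<bullet> (A *v x)) - g (A *v x)"
      using that tr_inner[of A v x] by simp
    also have "\<dots> \<le> (SUP y. ereal (v \<bullet> y) - g y)" by (rule SUP_upper) simp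
    finally show "ereal (w \<bullet> x) - g (A *v x) \<le> (SUP y. ereal (v \<bullet> y) - g y)" .
  qed
  have low: "?h w \<noteq> -\<infinity>" for w
  proof -
    have "A *v x0 \<in> edom g" using x0 unfolding ri_def by auto
    moreover have "g (A *v x0) > -\<infinity>" using assms(1) unfolding proper_fun_def by auto
    ultimately obtain R where R: "g (A *v x0) = ereal R" unfolding edom_def
      by (cases "g (A *v x0)") auto
    have "ereal (w \<bullet> x0) - g (A *v x0) \<le> ?h w" unfolding fconj_def by (rule SUP_upper) simp
    then show ?thesis using R by auto
  qed
  have both: "?h w = (INF v\<in>{v. transpose A *v v = w}. fconj g v) \<and>
     (?h w \<noteq> \<infinity> \<and> ?h w \<noteq> -\<infinity> \<longrightarrow> (\<exists>v. transpose A *v v = w \<and> ?h w = fconj g v))" for w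
  proof (cases "?h w")
    case (real r)
    obtain v where v: "transpose A *v v = w" "fconj g v \<le> ereal r"
      using core[OF assms(1,2) x0 real] by blast
    have eq: "?h w = fconj g v" using easy[OF v(1)] v(2) real by simp
    have "(INF v\<in>{v. transpose A *v v = w}. fconj g v) \<le> fconj g v"
      using v(1) by (intro INF_lower) simp
    moreover have "?h w \<le> (INF v\<in>{v. transpose A *v v = w}. fconj g v)"
      by (intro INF_greatest easy) simp
    ultimately show ?thesis using eq v(1) by auto
  next
    case PInf
    have "?h w \<le> (INF v\<in>{v. transpose A *v v = w}. fconj g v)"
      by (intro INF_greatest easy) simp
    then show ?thesis using PInf by simp
  next
    case MInf
    then show ?thesis using low[of w] by simp
  qed
  then show ?thesis by blast
qed

end
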